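(* There exists an instance of the two-party spatial voting game with abstention described in the context, with $X$ consisting of seven policies, both parties' preferences strict and single-peaked, and four voters, that has a pure-strategy Nash equilibrium $(s,t)$ exhibiting mutual leapfrogging, i.e. $t<\tau_A<\tau_B<s$, and at which every voter is active.
   Context: Policy space: $X=\{x_j : j\in I\}$ where $I\subseteq\mathbb Z$ is an interval of integers and $x_j<x_{j+1}$; $X$ is linearly ordered by $<$. Parties: two parties $A$ and $B$ with ideal points $\tau_A=x_p$ and $\tau_B=x_q$, where $p<q$. Each party $i\in\{A,B\}$ has a weak preference order $\succeq_i$ on $X$ with unique ideal point $\tau_i$. Single-peakedness of $\succeq_i$: if $x_a<x_b\le\tau_i$ then $x_b\succ_i x_a$, and if $\tau_i\le x_b<x_a$ then $x_b\succ_i x_a$ (no restriction is imposed on comparisons across opposite sides of $\tau_i$). Voters: a finite electorate $V$. Each voter $v\in V$ has an ideal point $\theta_v\in X$, strict single-peaked preferences over $X$ with peak $\theta_v$, and an attraction interval $A_v\subseteq X$, an interval of the order on $X$ containing $\theta_v$. Election: party $A$ chooses $s\in X$, party $B$ chooses $t\in X$. Voter $v$ is active at $(s,t)$ if $s\in A_v$ or $t\in A_v$. An active voter votes for the platform she strictly prefers and abstains if indifferent (in particular if $s=t$); inactive voters abstain. $N_A(s,t)$ (resp. $N_B(s,t)$) is the number of active voters strictly preferring $s$ to $t$ (resp. $t$ to $s$). The outcome $g(s,t)$ is $A$ if $N_A>N_B$, $B$ if $N_B>N_A$, and $T$ (tie) if equal. Party objectives (lexicographic): Win $\succ$ Tie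 $\succ$ Lose for each party (outcome $A$ is a win for $A$ and a loss for $B$, and vice versa); between profiles with the same electoral outcome, $A$ weakly prefers $(s,t)$ to $(s',t')$ iff $s\succeq_A s'$, and $B$ iff $t\succeq_B t'$. A pure-strategy Nash equilibrium is a profile at which neither party has a strictly preferred unilateral deviation. *)

theory Defs
  imports Complex_Main
begin

(* Preferences are relations R :: 'a => 'a => bool on the policy space X,
   R x y meaning "x is weakly preferred to y". *)

definition weak_order_on :: "'a set \<Rightarrow> ('a \<Rightarrow> 'a \<Rightarrow> bool) \<Rightarrow> bool" where
  "weak_order_on X R \<longleftrightarrow>
     (\<forall>x\<in>X. \<forall>y\<in>X. R x y \<or> R y x) \<and>
     (\<forall>x\<in>X. \<forall>y\<in>X. \<forall>z\<in>X. R x y \<and> R y z \<longrightarrow> R x z)"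

definition spref :: "('a \<Rightarrow> 'a \<Rightarrow> bool) \<Rightarrow> 'a \<Rightarrow> 'a \<Rightarrow> bool" where
  "spref R x y \<longleftrightarrow> R x y \<and> \<not> R y x"

definition strict_order_on :: "'a set \<Rightarrow> ('a \<Rightarrow> 'a \<Rightarrow> bool) \<Rightarrow> bool" where
  "strict_order_on X R \<longleftrightarrow> weak_order_on X R \<and>
     (\<forall>x\<in>X. \<forall>y\<in>X. R x y \<and> R y x \<longrightarrow> x = y)"

definition single_peaked :: "('a::linorder) set \<Rightarrow> ('a \<Rightarrow> 'a \<Rightarrow> bool) \<Rightarrow> 'a \<Rightarrow> bool" where
  "single_peaked X R \<tau> \<longleftrightarrow> \<tau> \<in> X \<and>
     (\<forall>x\<in>X. x \<noteq> \<tau> \<longrightarrow> spref R \<tau> x) \<and>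
     (\<forall>a\<in>X. \<forall>b\<in>X. a < b \<and> b \<le> \<tau> \<longrightarrow> spref R b a) \<and>
     (\<forall>a\<in>X. \<forall>b\<in>X. \<tau> \<le> b \<and> b < a \<longrightarrow> spref R b a)"

definition interval_in :: "('a::linorder) set \<Rightarrow> 'a set \<Rightarrow> bool" where
  "interval_in X S \<longleftrightarrow> S \<subseteq> X \<and>
     (\<forall>a\<in>S. \<forall>c\<in>S. \<forall>b\<in>X. a \<le> b \<and> b \<le> c \<longrightarrow> b \<in> S)"

(* V: voters; th: ideal points; P: voter preferences; Att: attraction intervals *)
definition active :: "('v \<Rightarrow> 'a set) \<Rightarrow> 'v \<Rightarrow> 'a \<Rightarrow> 'a \<Rightarrow> bool" where
  "active Att v s t \<longleftrightarrow> s \<in> Att v \<or> t \<in> Att v"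

definition votesA :: "'v set \<Rightarrow> ('v \<Rightarrow> 'a \<Rightarrow> 'a \<Rightarrow> bool) \<Rightarrow> ('v \<Rightarrow> 'a set) \<Rightarrow> 'a \<Rightarrow> 'a \<Rightarrow> nat" where
  "votesA V P Att s t = card {v\<in>V. active Att v s t \<and> spref (P v) s t}"

definition votesB :: "'v set \<Rightarrow> ('v \<Rightarrow> 'a \<Rightarrow> 'a \<Rightarrow> bool) \<Rightarrow> ('v \<Rightarrow> 'a set) \<Rightarrow> 'a \<Rightarrow> 'a \<Rightarrow> nat" where
  "votesB V P Att s t = card {v\<in>V. active Att v s t \<and> spref (P v) t s}"

datatype outcome = WinA | WinB | Tie

definition outcome :: "'v set \<Rightarrow> ('v \<Rightarrow> 'a \<Rightarrow> 'a \<Rightarrow> bool) \<Rightarrow> ('v \<Rightarrow> 'a set) \<Rightarrow> 'a \<Rightarrow> 'a \<Rightarrow> outcome" where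
  "outcome V P Att s t =
     (if votesA V P Att s t > votesB V P Att s t then WinA
      else if votesB V P Att s t > votesA V P Att s t then WinB else Tie)"

fun rankA :: "outcome \<Rightarrow> nat" where
  "rankA WinA = 2" | "rankA Tie = 1" | "rankA WinB = 0"
fun rankB :: "outcome \<Rightarrow> nat" where
  "rankB WinB = 2" | "rankB Tie = 1" | "rankB WinA = 0"

definition valid_instance ::
  "('a::linorder) set \<Rightarrow> 'a \<Rightarrow> 'a \<Rightarrow> ('a \<Rightarrow> 'a \<Rightarrow> bool) \<Rightarrow> ('a \<Rightarrow> 'a \<Rightarrow> bool)
   \<Rightarrow> 'v set \<Rightarrow> ('v \<Rightarrow> 'a) \<Rightarrow> ('v \<Rightarrow> 'a \<Rightarrow> 'a \<Rightarrow> bool) \<Rightarrow> ('v \<Rightarrow> 'a set) \<Rightarrow> bool" where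
  "valid_instance X \<tau>A \<tau>B RA RB V th P Att \<longleftrightarrow>
     finite V \<and> \<tau>A < \<tau>B \<and>
     weak_order_on X RA \<and> single_peaked X RA \<tau>A \<and>
     weak_order_on X RB \<and> single_peaked X RB \<tau>B \<and>
     (\<forall>v\<in>V. th v \<in> X \<and> strict_order_on X (P v) \<and> single_peaked X (P v) (th v) \<and>
             interval_in X (Att v) \<and> th v \<in> Att v)"

(* pure-strategy Nash equilibrium with lexicographic objectives *)
definition nash ::
  "'a set \<Rightarrow> ('a \<Rightarrow> 'a \<Rightarrow> bool) \<Rightarrow> ('a \<Rightarrow> 'a \<Rightarrow> bool)
   \<Rightarrow> 'v set \<Rightarrow> ('v \<Rightarrow> 'a \<Rightarrow> 'a \<Rightarrow> bool) \<Rightarrow> ('v \<Rightarrow> 'a set) \<Rightarrow> 'a \<Rightarrow> 'a \<Rightarrow> bool" where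
  "nash X RA RB V P Att s t \<longleftrightarrow> s \<in> X \<and> t \<in> X \<and>
     (\<forall>s'\<in>X. \<not> (rankA (outcome V P Att s' t) > rankA (outcome V P Att s t) \<or>
                 (outcome V P Att s' t = outcome V P Att s t \<and> spref RA s' s))) \<and>
     (\<forall>t'\<in>X. \<not> (rankB (outcome V P Att s t') > rankB (outcome V P Att s t) \<or>
                 (outcome V P Att s t' = outcome V P Att s t \<and> spref RB t' t)))"

end

theory Submission
  imports Defs
begin

fun rk :: "real list \<Rightarrow> real \<Rightarrow> nat" where
  "rk [] x = 0"
| "rk (y # ys) x = (if x = y then 0 else Suc (rk ys x))"

definition rel :: "real list \<Rightarrow> real \<Rightarrow> real \<Rightarrow> bool" where
  "rel l x y \<longleftrightarrow> rk l x \<le> rk l y"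

definition LL :: "nat \<Rightarrow> real list" where
  "LL v = [[7,6,5,4,3,2,1],[4,3,2,5,6,1,7],[1,2,3,4,5,6,7],[7,6,5,4,3,2,1]] ! v"

definition PP :: "nat \<Rightarrow> real \<Rightarrow> real \<Rightarrow> bool" where
  "PP v = rel (LL v)"

definition AA :: "nat \<Rightarrow> real set" where
  "AA v = [{7},{2,3,4},{1,2,3,4,5},{6,7}] ! v"

definition TH :: "nat \<Rightarrow> real" where
  "TH v = [7,4,1,7] ! v"

lemma card4: "card {v \<in> {0,1,2,3::nat}. Q v} =
  (if Q 0 then 1 else 0) + (if Q 1 then 1 else 0) + (if Q 2 then 1 else 0) + (if Q 3 then 1 else 0)"
proof -
  have "card {v \<in> {0,1,2,3::nat}. Q v} = (\<Sum>v\<in>{0,1,2,3::nat}. if Q v then 1 else 0)"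
    by (simp add: sum.If_cases Int_def)
  then show ?thesis by simp
qed

lemma vA: "votesA {0,1,2,3} PP AA s t =
  (if active AA 0 s t \<and> spref (PP 0) s t then 1 else 0) +
  (if active AA 1 s t \<and> spref (PP 1) s t then 1 else 0) +
  (if active AA 2 s t \<and> spref (PP 2) s t then 1 else 0) +
  (if active AA 3 s t \<and> spref (PP 3) s t then 1 else 0)"
  unfolding votesA_def by (rule card4)

lemma vB: "votesB {0,1,2,3} PP AA s t =
  (if active AA 0 s t \<and> spref (PP 0) t s then 1 else 0) +
  (if active AA 1 s t \<and> spref (PP 1) t s then 1 else 0) +
  (if active AA 2 s t \<and> spref (PP 2) t s then 1 else 0) +
  (if active AA 3 s t \<and> spref (PP 3) t s then 1 else 0)"
  unfolding votesB_def by (rule card4)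

lemma nashx: "nash {1,2,3,4,5,6,7} (rel [5,6,7,4,3,2,1]) (rel [6,5,4,3,2,7,1])
   {0,1,2,3} PP AA 7 4"
  unfolding nash_def outcome_def vA vB
  by (simp add: active_def spref_def PP_def rel_def LL_def AA_def)

lemma validx: "valid_instance {1,2,3,4,5,6,7} 5 6 (rel [5,6,7,4,3,2,1]) (rel [6,5,4,3,2,7,1])
   {0,1,2,3} TH PP AA"
  unfolding valid_instance_def weak_order_on_def single_peaked_def strict_order_on_def
    interval_in_def spref_def
  by (simp add: PP_def rel_def LL_def AA_def TH_def)

lemma strictx: "strict_order_on {1,2,3,4,5,6,7} (rel [5,6,7,4,3,2,1])"
   "strict_order_on {1,2,3,4,5,6,7} (rel [6,5,4,3,2,7,1])"
  unfolding weak_order_on_def strict_order_on_def by (simp_all add: rel_def)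

theorem mainTheorem5:
  shows "\<exists>(X::real set) (\<tau>A::real) \<tau>B RA RB (V::nat set) th P Att s t.
    card X = 7 \<and> card V = 4 \<and>
    valid_instance X \<tau>A \<tau>B RA RB V th P Att \<and>
    strict_order_on X RA \<and> strict_order_on X RB \<and>
    nash X RA RB V P Att s t \<and>
    t < \<tau>A \<and> \<tau>A < \<tau>B \<and> \<tau>B < s \<and>
    (\<forall>v\<in>V. active Att v s t)"
  apply (rule exI[of _ "{1,2,3,4,5,6,7}"], rule exI[of _ 5], rule exI[of _ 6],
         rule exI[of _ "rel [5,6,7,4,3,2,1]"], rule exI[of _ "rel [6,5,4,3,2,7,1]"],
         rule exI[of _ "{0,1,2,3}"], rule exI[of _ TH], rule exI[of _ PP], rule exI[of _ AA],
         rule exI[of _ 7], rule exI[of _ 4])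
  using validx strictx nashx by (simp add: active_def AA_def)

end
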